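(* Consider a system of $k$ parallel $M/M/1$ queues, each with finite capacity $C'$, arrival rate $\mu$ and service rate $\lambda$ per server, where arriving customers join a queue of currently shortest length and are turned away if all queues are full. Let $\epsilon_{n_1, \ldots, n_k}$ be the steady-state probability that there are $n_i$ people in queue $i$ for $i \in \{1, \ldots, k\}$, and let $\zeta_{m_0, m_1, \ldots, m_{C'}}$ be the steady-state probability that there are $m_j$ queues with exactly $j$ customers, for $j \in \{0, 1, \ldots, C'\}$, so that $$\epsilon_{n_1, \ldots, n_k} = \frac{1}{\binom{k}{m_0, \ldots, m_{C'}}} \zeta_{m_0, \ldots, m_{C'}}$$ if $m_j = \sum_{i = 1}^k \mathbf{1}\{n_i = j \}$ for all $j \in \{0, \ldots, C'\}$. Then the $\zeta$ steady-state probabilities satisfy $$\Big(\mathbf{1}\{m_{C'} < k\}\frac{\mu}{\lambda} + (k - m_0) \Big) \zeta_{m_0, m_1, \ldots, m_{C'}} = \sum_{i = 1}^{C'} (m_i + 1) \zeta_{m_0, \ldots, m_{i-2}, m_{i-1} - 1, m_i + 1, \ldots, m_{C'}} + \frac{\mu}{\lambda} \big[\zeta_{m_0 + 1, m_1 - 1, m_2, \ldots, m_{C'}} + \zeta_{0, m_1 + 1, m_2 - 1, \ldots, m_{C'}} + \cdots + \zeta_{0, \ldots, 0, m_{C'-1} + 1, m_{C'} - 1} \big],$$ with $\zeta_{m_0, \ldots, m_{C'}} = 0$ unless $\sum_{j = 0}^{C'} m_j = k$ and $m_j \in \{0, \ldots, k\}$ for all $j$.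
   Context: $\binom{k}{m_0,\ldots,m_{C'}}=\frac{k!}{m_0!\cdots m_{C'}!}$ is the multinomial coefficient. The capacity $C'$ of each queue includes the customer being served. Arrivals form a Poisson process of rate $\mu$; each server has exponential service times with rate $\lambda$. *)

theory Defs
  imports Complex_Main
begin

definition jsq_states :: "nat \<Rightarrow> nat \<Rightarrow> (nat \<Rightarrow> nat) set" where
  "jsq_states k C = {n. (\<forall>i<k. n i \<le> C) \<and> (\<forall>i\<ge>k. n i = 0)}"

definition jsq_minlen :: "nat \<Rightarrow> (nat \<Rightarrow> nat) \<Rightarrow> nat" where
  "jsq_minlen k n = Min (n ` {..<k})"

definition jsq_rate :: "nat \<Rightarrow> nat \<Rightarrow> real \<Rightarrow> real \<Rightarrow> (nat \<Rightarrow> nat) \<Rightarrow> (nat \<Rightarrow> nat) \<Rightarrow> real" where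
  "jsq_rate k C mu lam n n' =
     (\<Sum>i<k. (if 0 < n i \<and> n' = n(i := n i - 1) then lam else 0)
           + (if n i < C \<and> n i = jsq_minlen k n \<and> n' = n(i := n i + 1)
              then mu / real (card {j. j < k \<and> n j = jsq_minlen k n}) else 0))"

definition jsq_stationary :: "nat \<Rightarrow> nat \<Rightarrow> real \<Rightarrow> real \<Rightarrow> ((nat \<Rightarrow> nat) \<Rightarrow> real) \<Rightarrow> bool" where
  "jsq_stationary k C mu lam eps \<longleftrightarrow>
     (\<forall>n\<in>jsq_states k C. 0 \<le> eps n) \<and>
     (\<Sum>n\<in>jsq_states k C. eps n) = 1 \<and>
     (\<forall>n\<in>jsq_states k C.
        eps n * (\<Sum>n'\<in>jsq_states k C - {n}. jsq_rate k C mu lam n n')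
        = (\<Sum>n'\<in>jsq_states k C - {n}. eps n' * jsq_rate k C mu lam n' n))"

definition jsq_count :: "nat \<Rightarrow> (nat \<Rightarrow> nat) \<Rightarrow> nat \<Rightarrow> nat" where
  "jsq_count k n j = card {i. i < k \<and> n i = j}"

text \<open>Indices m are integer-valued (so that m j - 1 may be negative, in which case
  zeta vanishes); values m j for j > C are irrelevant.\<close>
definition jsq_zeta :: "nat \<Rightarrow> nat \<Rightarrow> ((nat \<Rightarrow> nat) \<Rightarrow> real) \<Rightarrow> (nat \<Rightarrow> int) \<Rightarrow> real" where
  "jsq_zeta k C eps m =
     (\<Sum>n\<in>jsq_states k C. if (\<forall>j\<le>C. int (jsq_count k n j) = m j) then eps n else 0)"

end

theory Submission
  imports Defs
begin


definition jcls :: "nat \<Rightarrow> nat \<Rightarrow> (nat \<Rightarrow> int) \<Rightarrow> (nat \<Rightarrow> nat) \<Rightarrow> bool" where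
  "jcls k C m n \<longleftrightarrow> (\<forall>j\<le>C. int (jsq_count k n j) = m j)"

definition mdec :: "(nat \<Rightarrow> int) \<Rightarrow> nat \<Rightarrow> nat \<Rightarrow> int" where
  "mdec m v = m(v - 1 := m (v - 1) - 1, v := m v + 1)"

definition marr :: "(nat \<Rightarrow> int) \<Rightarrow> nat \<Rightarrow> nat \<Rightarrow> int" where
  "marr m j = (\<lambda>l. if l < j - 1 then 0 else if l = j - 1 then m l + 1 else if l = j then m l - 1 else m l)"

lemma zeta_alt: "jsq_zeta k C eps m = (\<Sum>n\<in>jsq_states k C. if jcls k C m n then eps n else 0)"
  by (simp add: jsq_zeta_def jcls_def)

lemma fin_states: "finite (jsq_states k C)"
proof -
  have eq: "jsq_states k C = {f. \<forall>x. (x \<in> {..<k} \<longrightarrow> f x \<in> {..C}) \<and> (x \<notin> {..<k} \<longrightarrow> f x = 0)}"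
    unfolding jsq_states_def lessThan_iff atMost_iff not_less all_conj_distrib by (rule refl)
  show ?thesis unfolding eq by (rule finite_set_of_finite_funs) auto
qed

lemma count_upd:
  assumes "i < k"
  shows "int (jsq_count k (n(i:=w)) l) = int (jsq_count k n l) - (if n i = l then 1 else 0) + (if w = l then 1 else 0)"
proof -
  let ?A = "{i'. i' < k \<and> n i' = l}"
  have fA: "finite ?A" by simp
  have cA: "jsq_count k n l = card ?A" by (simp only: jsq_count_def)
  show ?thesis
  proof (cases "n i = l")
    case True
    then have iA: "i \<in> ?A" using assms by simp
    show ?thesis
    proof (cases "w = l")
      case True
      have "{i'. i' < k \<and> (n(i:=w)) i' = l} = ?A" using True \<open>n i = l\<close> by (intro set_eqI) (simp add: fun_upd_apply)
      then show ?thesis using True \<open>n i = l\<close> unfolding jsq_count_def by simp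
    next
      case False
      have e: "{i'. i' < k \<and> (n(i:=w)) i' = l} = ?A - {i}" using False \<open>n i = l\<close> by (intro set_eqI) (simp add: fun_upd_apply)
      have "card ?A = Suc (card (?A - {i}))" using iA fA by (rule card.remove[rotated])
      then have "int (card ?A) = int (card (?A - {i})) + 1" by linarith
      then show ?thesis using False \<open>n i = l\<close> unfolding jsq_count_def e by simp
    qed
  next
    case False
    then have iA: "i \<notin> ?A" by simp
    show ?thesis
    proof (cases "w = l")
      case True
      have e: "{i'. i' < k \<and> (n(i:=w)) i' = l} = insert i ?A" using True assms by (intro set_eqI) (simp add: fun_upd_apply)
      have "card (insert i ?A) = Suc (card ?A)" using iA fA by (rule card_insert_disjoint[rotated])
      then show ?thesis using True False unfolding jsq_count_def e by simp
    next
      case False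
      have "{i'. i' < k \<and> (n(i:=w)) i' = l} = ?A" using False \<open>n i \<noteq> l\<close> by (intro set_eqI) (simp add: fun_upd_apply)
      then show ?thesis using False \<open>n i \<noteq> l\<close> unfolding jsq_count_def by simp
    qed
  qed
qed

lemma jcls_upd: "i < k \<Longrightarrow> jcls k C m (n(i:=w)) \<longleftrightarrow>
   (\<forall>l\<le>C. int (jsq_count k n l) - (if n i = l then 1 else 0) + (if w = l then 1 else 0) = m l)"
  unfolding jcls_def by (simp only: count_upd)

lemma delta_helper: "finite A \<Longrightarrow> (\<Sum>x\<in>A. if Q x then (if P \<and> x = t then (c::real) else 0) else 0) = (if P \<and> t \<in> A \<and> Q t then c else 0)"
proof -
  assume "finite A"
  have "(\<Sum>x\<in>A. if Q x then (if P \<and> x = t then (c::real) else 0) else 0) = (\<Sum>x\<in>A. if x = t then (if P \<and> Q t then c else 0) else 0)"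
    by (rule sum.cong) auto
  also have "\<dots> = (if P \<and> t \<in> A \<and> Q t then c else 0)" using \<open>finite A\<close> by simp
  finally show ?thesis .
qed

lemma upd_in_states:
  assumes n: "n \<in> jsq_states k C" and i: "i < k" and w: "w \<le> C" and ne: "w \<noteq> n i"
  shows "n(i := w) \<in> jsq_states k C - {n}"
proof -
  have "n(i := w) \<noteq> n" using ne by (simp add: fun_upd_idem_iff)
  moreover have "\<forall>j<k. (n(i := w)) j \<le> C" using n w unfolding jsq_states_def by (simp add: fun_upd_apply)
  moreover have "\<forall>j\<ge>k. (n(i := w)) j = 0" using n i unfolding jsq_states_def by (simp add: fun_upd_apply)
  ultimately show ?thesis unfolding jsq_states_def by simp
qed

lemma rate_sum:
  assumes n: "n \<in> jsq_states k C"
  shows "(\<Sum>x\<in>jsq_states k C - {n}. if Q x then jsq_rate k C mu lam n x else 0) =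
    (\<Sum>i<k. (if 0 < n i \<and> Q (n(i := n i - 1)) then lam else 0) + (if n i < C \<and> n i = jsq_minlen k n \<and> Q (n(i := n i + 1)) then mu / real (card {j. j < k \<and> n j = jsq_minlen k n}) else 0))"
proof -
  let ?S = "jsq_states k C - {n}"
  let ?c = "mu / real (card {j. j < k \<and> n j = jsq_minlen k n})"
  let ?a = "\<lambda>x i. if Q x then (if 0 < n i \<and> x = n(i := n i - 1) then lam else 0) else 0"
  let ?b = "\<lambda>x i. if Q x then (if (n i < C \<and> n i = jsq_minlen k n) \<and> x = n(i := n i + 1) then ?c else 0) else 0"
  have fS: "finite ?S" using fin_states by simp
  have "(\<Sum>x\<in>?S. if Q x then jsq_rate k C mu lam n x else 0) = (\<Sum>x\<in>?S. \<Sum>i<k. ?a x i + ?b x i)"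
  proof (rule sum.cong[OF refl])
    fix x
    show "(if Q x then jsq_rate k C mu lam n x else 0) = (\<Sum>i<k. ?a x i + ?b x i)"
      unfolding jsq_rate_def by (cases "Q x") (simp_all only: if_True if_False conj_assoc add_0 sum.neutral_const)
  qed
  also have "\<dots> = (\<Sum>i<k. \<Sum>x\<in>?S. ?a x i + ?b x i)"
    by (rule sum.swap)
  also have "\<dots> = (\<Sum>i<k. (if 0 < n i \<and> Q (n(i := n i - 1)) then lam else 0) + (if n i < C \<and> n i = jsq_minlen k n \<and> Q (n(i := n i + 1)) then ?c else 0))"
  proof (rule sum.cong[OF refl])
    fix i assume "i \<in> {..<k}"
    then have i: "i < k" by simp
    have nC: "n i \<le> C" using n i unfolding jsq_states_def by simp
    have d: "(\<Sum>x\<in>?S. ?a x i) = (if 0 < n i \<and> Q (n(i := n i - 1)) then lam else 0)"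
    proof (cases "0 < n i")
      case True
      have "n(i := n i - 1) \<in> ?S" using upd_in_states[OF n i] nC True by simp
      then show ?thesis unfolding delta_helper[OF fS] by simp
    next
      case False
      then show ?thesis by (simp only: False simp_thms if_False if_cancel sum.neutral_const)
    qed
    have u: "(\<Sum>x\<in>?S. ?b x i) = (if n i < C \<and> n i = jsq_minlen k n \<and> Q (n(i := n i + 1)) then ?c else 0)"
    proof (cases "n i < C")
      case True
      have "n(i := n i + 1) \<in> ?S" using upd_in_states[OF n i] True by simp
      then show ?thesis unfolding delta_helper[OF fS] by simp
    next
      case False
      then show ?thesis by (simp only: False simp_thms if_False if_cancel sum.neutral_const)
    qed
    show "(\<Sum>x\<in>?S. ?a x i + ?b x i) = (if 0 < n i \<and> Q (n(i := n i - 1)) then lam else 0) + (if n i < C \<and> n i = jsq_minlen k n \<and> Q (n(i := n i + 1)) then ?c else 0)"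
      unfolding sum.distrib d u ..
  qed
  finally show ?thesis .
qed

lemma set_lt_filter: "{x \<in> {..<k}. P x} = {x. x < (k::nat) \<and> P x}" by auto

lemma sum_if_const: "finite A \<Longrightarrow> (\<Sum>x\<in>A. if P x then (c::real) else 0) = real (card {x\<in>A. P x}) * c"
  by (simp add: sum.inter_filter[symmetric])

lemma minlen_ex: "1 \<le> k \<Longrightarrow> \<exists>i0<k. n i0 = jsq_minlen k n"
proof -
  assume k: "1 \<le> k"
  have "jsq_minlen k n \<in> n ` {..<k}" unfolding jsq_minlen_def using k
    by (intro Min_in) (auto simp: lessThan_empty_iff)
  thus ?thesis by auto
qed

lemma minlen_le: "i < k \<Longrightarrow> jsq_minlen k n \<le> n i"
  unfolding jsq_minlen_def by (intro Min_le) auto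

lemma cardM_pos: "1 \<le> k \<Longrightarrow> 0 < card {j. j < k \<and> n j = jsq_minlen k n}"
  using minlen_ex[of k n] by (subst card_gt_0_iff) auto

lemma mn_lt_C:
  assumes n: "n \<in> jsq_states k C" and k: "1 \<le> k"
  shows "jsq_minlen k n < C \<longleftrightarrow> jsq_count k n C < k"
proof (cases "\<forall>i<k. n i = C")
  case True
  then have "{i. i < k \<and> n i = C} = {..<k}" by auto
  moreover obtain i0 where "i0 < k" "n i0 = jsq_minlen k n" using minlen_ex[OF k] by blast
  ultimately show ?thesis using True by (simp add: jsq_count_def)
next
  case False
  then obtain i where i: "i < k" "n i \<noteq> C" by blast
  then have "n i < C" using n by (auto simp: jsq_states_def le_less)
  then have "jsq_minlen k n < C" using minlen_le[OF i(1), of n] by simp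
  moreover have "{j. j < k \<and> n j = C} \<subseteq> {..<k} - {i}" using i by auto
  then have "jsq_count k n C \<le> card ({..<k} - {i})" unfolding jsq_count_def by (intro card_mono) auto
  then have "jsq_count k n C < k" using i by simp
  ultimately show ?thesis by simp
qed

lemma out_part1:
  "(\<Sum>i<k. (if 0 < n i then lam else 0)) = lam * (real k - real (jsq_count k n 0))"
proof -
  have "(\<Sum>i<k. (if 0 < n i then lam else 0)) = (\<Sum>i<k. lam - (if n i = 0 then lam else 0))"
    by (rule sum.cong) simp_all
  also have "\<dots> = real k * lam - real (card {i\<in>{..<k}. n i = 0}) * lam"
    by (simp only: sum_subtractf sum_if_const[OF finite_lessThan] sum_constant card_lessThan)
  also have "{i\<in>{..<k}. n i = 0} = {i. i < k \<and> n i = 0}" by (simp only: set_lt_filter)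
  finally show ?thesis by (simp add: jsq_count_def algebra_simps)
qed

lemma out_part2:
  assumes n: "n \<in> jsq_states k C" and k: "1 \<le> k"
  shows "(\<Sum>i<k. (if n i < C \<and> n i = jsq_minlen k n then mu / real (card {j. j < k \<and> n j = jsq_minlen k n}) else 0)) = (if jsq_count k n C < k then mu else 0)"
proof -
  let ?mn = "jsq_minlen k n"
  let ?M = "{j. j < k \<and> n j = ?mn}"
  have s: "(\<Sum>i<k. (if n i < C \<and> n i = ?mn then mu / real (card ?M) else 0)) = real (card {i\<in>{..<k}. n i < C \<and> n i = ?mn}) * (mu / real (card ?M))"
    by (rule sum_if_const[OF finite_lessThan])
  show ?thesis
  proof (cases "?mn < C")
    case True
    have e: "{i\<in>{..<k}. n i < C \<and> n i = ?mn} = ?M" using True by (intro set_eqI) (simp, metis)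
    have cM: "real (card ?M) \<noteq> 0" using cardM_pos[OF k, of n] by linarith
    have c: "jsq_count k n C < k" using True mn_lt_C[OF n k] by blast
    have "real (card ?M) * (mu / real (card ?M)) = mu" using cM by simp
    then show ?thesis unfolding s e using c by (simp only: if_True)
  next
    case False
    have "\<And>i. \<not> (n i < C \<and> n i = ?mn)" using False by linarith
    then have e: "{i\<in>{..<k}. n i < C \<and> n i = ?mn} = {}" by simp
    have c: "\<not> jsq_count k n C < k" using False mn_lt_C[OF n k] by blast
    show ?thesis unfolding s e using c by (simp only: if_False card.empty of_nat_0 mult_zero_left)
  qed
qed

lemma out_rate:
  assumes n: "n \<in> jsq_states k C" and k: "1 \<le> k"
  shows "(\<Sum>x\<in>jsq_states k C - {n}. jsq_rate k C mu lam n x) =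
     lam * (real k - real (jsq_count k n 0)) + (if jsq_count k n C < k then mu else 0)"
proof -
  have "(\<Sum>x\<in>jsq_states k C - {n}. jsq_rate k C mu lam n x) = 
    (\<Sum>x\<in>jsq_states k C - {n}. if (\<lambda>_. True) x then jsq_rate k C mu lam n x else 0)" by simp
  also have "\<dots> = (\<Sum>i<k. (if 0 < n i then lam else 0)) + (\<Sum>i<k. (if n i < C \<and> n i = jsq_minlen k n then mu / real (card {j. j < k \<and> n j = jsq_minlen k n}) else 0))"
    unfolding rate_sum[OF n] sum.distrib[symmetric] by simp
  also have "\<dots> = lam * (real k - real (jsq_count k n 0)) + (if jsq_count k n C < k then mu else 0)"
    unfolding out_part1 out_part2[OF n k] ..
  finally show ?thesis .
qed

lemma sum_group:
  assumes "\<forall>i<k. n i \<le> C"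
  shows "(\<Sum>i<k. F (n i)) = (\<Sum>v\<le>C. real (jsq_count k n v) * (F v :: real))"
proof -
  have "(\<Sum>i<k. F (n i)) = (\<Sum>i<k. \<Sum>v\<le>C. if n i = v then F v else 0)"
    by (rule sum.cong) (use assms in auto)
  also have "\<dots> = (\<Sum>v\<le>C. \<Sum>i<k. if n i = v then F v else 0)" by (rule sum.swap)
  also have "\<dots> = (\<Sum>v\<le>C. real (jsq_count k n v) * F v)"
    by (rule sum.cong) (simp_all add: sum_if_const jsq_count_def set_lt_filter)
  finally show ?thesis .
qed

lemma count_sum:
  assumes n: "n \<in> jsq_states k C"
  shows "(\<Sum>l\<le>C. int (jsq_count k n l)) = int k"
proof -
  have "(\<Sum>i<k. (\<lambda>_. 1::real) (n i)) = (\<Sum>v\<le>C. real (jsq_count k n v) * 1)"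
    by (rule sum_group) (use n in \<open>auto simp: jsq_states_def\<close>)
  then have "real_of_int (\<Sum>l\<le>C. int (jsq_count k n l)) = real_of_int (int k)" by simp
  thus ?thesis by (simp only: of_int_eq_iff)
qed

lemma jcls_dec:
  assumes "i < k" "0 < n i"
  shows "jcls k C m (n(i := n i - 1)) \<longleftrightarrow> jcls k C (mdec m (n i)) n"
proof -
  let ?v = "n i"
  have pw: "(int (jsq_count k n l) - (if ?v = l then 1 else 0) + (if ?v - 1 = l then 1 else 0) = m l)
     \<longleftrightarrow> (int (jsq_count k n l) = mdec m ?v l)" for l
  proof (cases "l = ?v")
    case True
    have "n i - 1 \<noteq> n i" "n i - Suc 0 \<noteq> n i" using assms(2) by simp_all
    then show ?thesis using True unfolding mdec_def by (simp; linarith)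
  next
    case False
    then show ?thesis unfolding mdec_def by (cases "l = ?v - 1"; simp; linarith)
  qed
  have "jcls k C m (n(i := n i - 1)) \<longleftrightarrow> (\<forall>l\<le>C. int (jsq_count k n l) - (if ?v = l then 1 else 0) + (if ?v - 1 = l then 1 else 0) = m l)"
    by (rule jcls_upd[OF assms(1)])
  also have "\<dots> \<longleftrightarrow> (\<forall>l\<le>C. int (jsq_count k n l) = mdec m ?v l)" by (simp only: pw)
  also have "\<dots> \<longleftrightarrow> jcls k C (mdec m ?v) n" by (simp only: jcls_def)
  finally show ?thesis .
qed

lemma in_dec:
  assumes n: "n \<in> jsq_states k C"
  shows "(\<Sum>i<k. if 0 < n i \<and> jcls k C m (n(i := n i - 1)) then lam else 0)
     = lam * (\<Sum>v=1..C. real_of_int (m v + 1) * (if jcls k C (mdec m v) n then 1 else 0))"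
proof -
  let ?F = "\<lambda>v. if 0 < v \<and> jcls k C (mdec m v) n then lam else 0"
  have nle: "\<forall>i<k. n i \<le> C" using n by (auto simp: jsq_states_def)
  have "(\<Sum>i<k. if 0 < n i \<and> jcls k C m (n(i := n i - 1)) then lam else 0) = (\<Sum>i<k. ?F (n i))"
  proof (rule sum.cong[OF refl])
    fix i assume "i \<in> {..<k}"
    then show "(if 0 < n i \<and> jcls k C m (n(i := n i - 1)) then lam else 0) = ?F (n i)"
      using jcls_dec[of i k n C m] by (cases "0 < n i") simp_all
  qed
  also have "\<dots> = (\<Sum>v\<le>C. real (jsq_count k n v) * ?F v)" by (rule sum_group[OF nle])
  also have "\<dots> = (\<Sum>v=1..C. real (jsq_count k n v) * ?F v)"
  proof -
    have "{..C} = insert 0 {1..C}" by auto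
    thus ?thesis by simp
  qed
  also have "\<dots> = (\<Sum>v=1..C. lam * (real_of_int (m v + 1) * (if jcls k C (mdec m v) n then 1 else 0)))"
  proof (rule sum.cong[OF refl])
    fix v assume v: "v \<in> {1..C}"
    show "real (jsq_count k n v) * ?F v = lam * (real_of_int (m v + 1) * (if jcls k C (mdec m v) n then 1 else 0))"
    proof (cases "jcls k C (mdec m v) n")
      case True
      then have "int (jsq_count k n v) = mdec m v v" using v by (auto simp: jcls_def)
      then have "int (jsq_count k n v) = m v + 1" by (simp add: mdec_def)
      then have "real (jsq_count k n v) = real_of_int (m v + 1)" by (metis of_int_of_nat_eq)
      then show ?thesis using True v by simp
    qed simp
  qed
  also have "\<dots> = lam * (\<Sum>v=1..C. real_of_int (m v + 1) * (if jcls k C (mdec m v) n then 1 else 0))"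
    by (simp add: sum_distrib_left)
  finally show ?thesis .
qed

lemma marr_sum:
  assumes j: "1 \<le> j" "j \<le> C"
  shows "(\<Sum>l\<le>C. marr m j l) = (\<Sum>l\<le>C. m l) - (\<Sum>l<j-1. m l)"
proof -
  have "(\<Sum>l\<le>C. marr m j l) = (\<Sum>l\<le>C. m l - (if l < j - 1 then m l else 0) + (if l = j - 1 then 1 else 0) - (if l = j then 1 else 0))"
    by (rule sum.cong) (use j in \<open>auto simp: marr_def\<close>)
  also have "\<dots> = (\<Sum>l\<le>C. m l) - (\<Sum>l\<le>C. if l < j - 1 then m l else 0) + 1 - 1"
    using j by (simp add: sum.distrib sum_subtractf)
  also have "(\<Sum>l\<le>C. if l < j - 1 then m l else 0) = (\<Sum>l<j-1. m l)"
  proof -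
    have "{l \<in> {..C}. l < j - 1} = {..<j-1}" using j by auto
    thus ?thesis by (simp add: sum.inter_filter[symmetric])
  qed
  finally show ?thesis by simp
qed

lemma count_below_min: "l < jsq_minlen k n \<Longrightarrow> jsq_count k n l = 0"
  unfolding jsq_count_def using minlen_le[of _ k n] by fastforce

lemma jcls_arr:
  assumes n: "n \<in> jsq_states k C" and k: "1 \<le> k" and mpos: "\<forall>j\<le>C. 0 \<le> m j"
    and msum: "(\<Sum>j\<le>C. m j) = int k" and j: "1 \<le> j" "j \<le> C"
  shows "jcls k C (marr m j) n \<longleftrightarrow> (j = jsq_minlen k n + 1 \<and>
     (\<forall>l\<le>C. int (jsq_count k n l) - (if jsq_minlen k n = l then 1 else 0) + (if jsq_minlen k n + 1 = l then 1 else 0) = m l))"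
  (is "?L \<longleftrightarrow> ?R")
proof
  assume L: ?L
  let ?c = "\<lambda>l. int (jsq_count k n l)"
  have c: "\<And>l. l \<le> C \<Longrightarrow> ?c l = marr m j l" using L by (auto simp: jcls_def)
  have "(\<Sum>l\<le>C. marr m j l) = int k"
    using count_sum[OF n] c by (metis (no_types, lifting) atMost_iff sum.cong)
  then have "(\<Sum>l<j-1. m l) = 0" using marr_sum[OF j, of m] msum by simp
  then have m0: "\<And>l. l < j - 1 \<Longrightarrow> m l = 0"
    using mpos j by (subst (asm) sum_nonneg_eq_0_iff) auto
  have c0: "\<And>l. l < j - 1 \<Longrightarrow> ?c l = 0" using c j by (auto simp: marr_def)
  have cj1: "?c (j - 1) = m (j - 1) + 1" using c j by (auto simp: marr_def)
  have mj: "0 \<le> m (j - 1)" using mpos j by simp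
  have "jsq_count k n (j - 1) \<noteq> 0" using cj1 mj by linarith
  then obtain i where i: "i < k" "n i = j - 1" unfolding jsq_count_def by (auto simp: card_eq_0_iff)
  then have le: "jsq_minlen k n \<le> j - 1" using minlen_le[of i k n] by simp
  obtain i0 where i0: "i0 < k" "n i0 = jsq_minlen k n" using minlen_ex[OF k] by blast
  have "jsq_count k n (jsq_minlen k n) \<noteq> 0" using i0 unfolding jsq_count_def by auto
  then have "\<not> jsq_minlen k n < j - 1" using c0 by fastforce
  then have mn: "jsq_minlen k n = j - 1" using le by simp
  show ?R
  proof
    show "j = jsq_minlen k n + 1" using mn j by simp
    show "\<forall>l\<le>C. ?c l - (if jsq_minlen k n = l then 1 else 0) + (if jsq_minlen k n + 1 = l then 1 else 0) = m l"
    proof (intro allI impI)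
      fix l assume l: "l \<le> C"
      show "?c l - (if jsq_minlen k n = l then 1 else 0) + (if jsq_minlen k n + 1 = l then 1 else 0) = m l"
        using c[OF l] m0 c0 j mn by (auto simp: marr_def)
    qed
  qed
next
  assume R: ?R
  show ?L unfolding jcls_def
  proof (intro allI impI)
    fix l assume l: "l \<le> C"
    have G: "int (jsq_count k n l) - (if jsq_minlen k n = l then 1 else 0) + (if jsq_minlen k n + 1 = l then 1 else 0) = m l"
      using R l by blast
    show "int (jsq_count k n l) = marr m j l"
    proof (cases "l < jsq_minlen k n")
      case True
      then show ?thesis using count_below_min[OF True] G R by (auto simp: marr_def)
    next
      case False
      then show ?thesis using G R by (auto simp: marr_def)
    qed
  qed
qed



lemma in_arr:
  assumes n: "n \<in> jsq_states k C" and k: "1 \<le> k" and mpos: "\<forall>j\<le>C. 0 \<le> m j"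
    and msum: "(\<Sum>j\<le>C. m j) = int k"
  shows "(\<Sum>i<k. if n i < C \<and> n i = jsq_minlen k n \<and> jcls k C m (n(i := n i + 1))
            then mu / real (card {j. j < k \<and> n j = jsq_minlen k n}) else 0)
     = mu * (\<Sum>j=1..C. if jcls k C (marr m j) n then 1 else 0)"
proof -
  let ?mn = "jsq_minlen k n"
  let ?M = "{j. j < k \<and> n j = ?mn}"
  let ?c = "mu / real (card ?M)"
  define G where "G = (\<forall>l\<le>C. int (jsq_count k n l) - (if ?mn = l then 1 else 0) + (if ?mn + 1 = l then 1 else 0) = m l)"
  have "(\<Sum>i<k. if n i < C \<and> n i = ?mn \<and> jcls k C m (n(i := n i + 1)) then ?c else 0)
      = (\<Sum>i<k. if n i < C \<and> n i = ?mn \<and> G then ?c else 0)"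
  proof (rule sum.cong[OF refl])
    fix i assume "i \<in> {..<k}"
    then have i: "i < k" by simp
    have "n i = ?mn \<Longrightarrow> jcls k C m (n(i := n i + 1)) = G"
      unfolding jcls_upd[OF i] G_def by simp
    then show "(if n i < C \<and> n i = ?mn \<and> jcls k C m (n(i := n i + 1)) then ?c else 0) = (if n i < C \<and> n i = ?mn \<and> G then ?c else 0)"
      by (cases "n i = ?mn") simp_all
  qed
  also have "\<dots> = real (card {i\<in>{..<k}. n i < C \<and> n i = ?mn \<and> G}) * ?c"
    by (rule sum_if_const[OF finite_lessThan])
  also have "\<dots> = (if ?mn < C \<and> G then mu else 0)"
  proof (cases "?mn < C \<and> G")
    case True
    have e: "{i\<in>{..<k}. n i < C \<and> n i = ?mn \<and> G} = ?M" using True by (intro set_eqI) (simp, metis)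
    have cM: "real (card ?M) \<noteq> 0" using cardM_pos[OF k, of n] by linarith
    have "real (card ?M) * (mu / real (card ?M)) = mu" using cM by simp
    then show ?thesis unfolding e using True by simp
  next
    case False
    have "\<And>i. \<not> (n i < C \<and> n i = ?mn \<and> G)" using False by (metis order.strict_trans1 order_refl)
    then have e: "{i\<in>{..<k}. n i < C \<and> n i = ?mn \<and> G} = {}" by simp
    show ?thesis unfolding e using False by (simp only: if_False card.empty of_nat_0 mult_zero_left)
  qed
  also have "\<dots> = mu * (\<Sum>j=1..C. if jcls k C (marr m j) n then 1 else 0)"
  proof -
    have "(\<Sum>j=1..C. if jcls k C (marr m j) n then 1 else 0) = (\<Sum>j=1..C. if j = ?mn + 1 then (if G then 1 else (0::real)) else 0)"
    proof (rule sum.cong[OF refl])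
      fix j assume "j \<in> {1..C}"
      then have j: "1 \<le> j" "j \<le> C" by auto
      have "jcls k C (marr m j) n = (j = ?mn + 1 \<and> G)"
        using jcls_arr[OF n k mpos msum j] unfolding G_def by (rule HOL.trans) (rule refl)
      then show "(if jcls k C (marr m j) n then 1 else 0) = (if j = ?mn + 1 then (if G then 1 else (0::real)) else 0)"
        by simp
    qed
    also have "\<dots> = (if ?mn + 1 \<in> {1..C} then (if G then 1 else 0) else 0)"
      by (rule sum.delta[OF finite_atLeastAtMost])
    also have "\<dots> = (if ?mn < C \<and> G then 1 else 0)"
    proof -
      have "(?mn + 1 \<in> {1..C}) = (?mn < C)" by (simp add: Suc_le_eq)
      then show ?thesis by simp
    qed
    finally show ?thesis by simp
  qed
  finally show ?thesis .
qed

lemma in_total: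
  assumes n: "n \<in> jsq_states k C" and k: "1 \<le> k" and mpos: "\<forall>j\<le>C. 0 \<le> m j"
    and msum: "(\<Sum>j\<le>C. m j) = int k"
  shows "(\<Sum>x\<in>jsq_states k C - {n}. if jcls k C m x then jsq_rate k C mu lam n x else 0)
    = lam * (\<Sum>v=1..C. real_of_int (m v + 1) * (if jcls k C (mdec m v) n then 1 else 0))
      + mu * (\<Sum>j=1..C. if jcls k C (marr m j) n then 1 else 0)"
  unfolding rate_sum[OF n] sum.distrib in_dec[OF n] in_arr[OF n k mpos msum] ..

theorem lemma4:
  fixes k C :: nat and mu lam :: real and eps :: "(nat \<Rightarrow> nat) \<Rightarrow> real" and m :: "nat \<Rightarrow> int"
  assumes "1 \<le> k" and "1 \<le> C" and "0 < mu" and "0 < lam"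
    and "jsq_stationary k C mu lam eps"
    and "\<forall>j\<le>C. 0 \<le> m j" and "(\<Sum>j\<le>C. m j) = int k"
  shows "((if m C < int k then mu / lam else 0) + real_of_int (int k - m 0)) * jsq_zeta k C eps m
    = (\<Sum>i=1..C. real_of_int (m i + 1) * jsq_zeta k C eps (m(i - 1 := m (i - 1) - 1, i := m i + 1)))
      + mu / lam * (\<Sum>j=1..C. jsq_zeta k C eps
            (\<lambda>l. if l < j - 1 then 0 else if l = j - 1 then m l + 1 else if l = j then m l - 1 else m l))"
proof -
  note k = assms(1) and mpos = assms(6) and msum = assms(7)
  let ?S = "jsq_states k C"
  have fS: "finite ?S" by (rule fin_states)
  have st: "\<And>n. n \<in> ?S \<Longrightarrow> eps n * (\<Sum>x\<in>?S - {n}. jsq_rate k C mu lam n x) = (\<Sum>x\<in>?S - {n}. eps x * jsq_rate k C mu lam x n)"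
    using assms(5) unfolding jsq_stationary_def by blast
  define K where "K = lam * real_of_int (int k - m 0) + (if m C < int k then mu else 0)"
  define X where "X = (\<Sum>v=1..C. real_of_int (m v + 1) * jsq_zeta k C eps (mdec m v))"
  define Y where "Y = (\<Sum>j=1..C. jsq_zeta k C eps (marr m j))"
  have L: "(\<Sum>n\<in>?S. if jcls k C m n then eps n * (\<Sum>x\<in>?S - {n}. jsq_rate k C mu lam n x) else 0) = K * jsq_zeta k C eps m"
  proof -
    have "(\<Sum>n\<in>?S. if jcls k C m n then eps n * (\<Sum>x\<in>?S - {n}. jsq_rate k C mu lam n x) else 0)
       = (\<Sum>n\<in>?S. K * (if jcls k C m n then eps n else 0))"
    proof (rule sum.cong[OF refl])
      fix n assume n: "n \<in> ?S"
      show "(if jcls k C m n then eps n * (\<Sum>x\<in>?S - {n}. jsq_rate k C mu lam n x) else 0) = K * (if jcls k C m n then eps n else 0)"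
      proof (cases "jcls k C m n")
        case True
        then have c0: "int (jsq_count k n 0) = m 0" and cC: "int (jsq_count k n C) = m C"
          by (auto simp: jcls_def)
        have "real k - real (jsq_count k n 0) = real_of_int (int k - m 0)" using c0 by (metis of_int_diff of_int_of_nat_eq)
        moreover have "(jsq_count k n C < k) = (m C < int k)" using cC by linarith
        ultimately have "(\<Sum>x\<in>?S - {n}. jsq_rate k C mu lam n x) = K"
          unfolding out_rate[OF n k] K_def by simp
        then show ?thesis using True by simp
      qed simp
    qed
    also have "\<dots> = K * jsq_zeta k C eps m" by (simp add: zeta_alt sum_distrib_left)
    finally show ?thesis .
  qed
  have R: "(\<Sum>n\<in>?S. if jcls k C m n then (\<Sum>x\<in>?S - {n}. eps x * jsq_rate k C mu lam x n) else 0) = lam * X + mu * Y"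
  proof -
    have "(\<Sum>n\<in>?S. if jcls k C m n then (\<Sum>x\<in>?S - {n}. eps x * jsq_rate k C mu lam x n) else 0)
       = (\<Sum>n\<in>?S. \<Sum>x\<in>?S. if jcls k C m n \<and> x \<noteq> n then eps x * jsq_rate k C mu lam x n else 0)"
    proof (rule sum.cong[OF refl])
      fix n assume n: "n \<in> ?S"
      have "?S - {n} = {x \<in> ?S. x \<noteq> n}" by auto
      then show "(if jcls k C m n then (\<Sum>x\<in>?S - {n}. eps x * jsq_rate k C mu lam x n) else 0)
        = (\<Sum>x\<in>?S. if jcls k C m n \<and> x \<noteq> n then eps x * jsq_rate k C mu lam x n else 0)"
        using fS by (simp add: sum.inter_filter)
    qed
    also have "\<dots> = (\<Sum>x\<in>?S. \<Sum>n\<in>?S. if jcls k C m n \<and> x \<noteq> n then eps x * jsq_rate k C mu lam x n else 0)"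
      by (rule sum.swap)
    also have "\<dots> = (\<Sum>x\<in>?S. eps x * (lam * (\<Sum>v=1..C. real_of_int (m v + 1) * (if jcls k C (mdec m v) x then 1 else 0))
      + mu * (\<Sum>j=1..C. if jcls k C (marr m j) x then 1 else 0)))"
    proof (rule sum.cong[OF refl])
      fix x assume x: "x \<in> ?S"
      have e: "?S - {x} = {n \<in> ?S. n \<noteq> x}" by auto
      have "(\<Sum>n\<in>?S. if jcls k C m n \<and> x \<noteq> n then eps x * jsq_rate k C mu lam x n else 0)
        = (\<Sum>n\<in>?S. eps x * (if n \<noteq> x then (if jcls k C m n then jsq_rate k C mu lam x n else 0) else 0))"
        by (rule sum.cong) auto
      also have "\<dots> = eps x * (\<Sum>n\<in>?S. if n \<noteq> x then (if jcls k C m n then jsq_rate k C mu lam x n else 0) else 0)"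
        by (simp only: sum_distrib_left)
      also have "(\<Sum>n\<in>?S. if n \<noteq> x then (if jcls k C m n then jsq_rate k C mu lam x n else 0) else 0)
          = (\<Sum>n\<in>?S - {x}. if jcls k C m n then jsq_rate k C mu lam x n else 0)"
        unfolding e sum.inter_filter[OF fS] ..
      finally show "(\<Sum>n\<in>?S. if jcls k C m n \<and> x \<noteq> n then eps x * jsq_rate k C mu lam x n else 0)
        = eps x * (lam * (\<Sum>v=1..C. real_of_int (m v + 1) * (if jcls k C (mdec m v) x then 1 else 0))
      + mu * (\<Sum>j=1..C. if jcls k C (marr m j) x then 1 else 0))"
        unfolding in_total[OF x k mpos msum] .
    qed
    also have "\<dots> = (\<Sum>x\<in>?S. lam * (\<Sum>v=1..C. real_of_int (m v + 1) * (if jcls k C (mdec m v) x then eps x else 0))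
       + mu * (\<Sum>j=1..C. if jcls k C (marr m j) x then eps x else 0))"
    proof (rule sum.cong[OF refl])
      fix x
      have a: "eps x * (\<Sum>v=1..C. real_of_int (m v + 1) * (if jcls k C (mdec m v) x then 1 else 0))
        = (\<Sum>v=1..C. real_of_int (m v + 1) * (if jcls k C (mdec m v) x then eps x else 0))"
        unfolding sum_distrib_left by (rule sum.cong) simp_all
      have b: "eps x * (\<Sum>j=1..C. if jcls k C (marr m j) x then 1 else 0)
        = (\<Sum>j=1..C. if jcls k C (marr m j) x then eps x else 0)"
        unfolding sum_distrib_left by (rule sum.cong) simp_all
      show "eps x * (lam * (\<Sum>v=1..C. real_of_int (m v + 1) * (if jcls k C (mdec m v) x then 1 else 0))
        + mu * (\<Sum>j=1..C. if jcls k C (marr m j) x then 1 else 0))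
        = lam * (\<Sum>v=1..C. real_of_int (m v + 1) * (if jcls k C (mdec m v) x then eps x else 0))
       + mu * (\<Sum>j=1..C. if jcls k C (marr m j) x then eps x else 0)"
        unfolding a[symmetric] b[symmetric] by (simp add: algebra_simps)
    qed
    also have "\<dots> = lam * (\<Sum>x\<in>?S. \<Sum>v=1..C. real_of_int (m v + 1) * (if jcls k C (mdec m v) x then eps x else 0))
       + mu * (\<Sum>x\<in>?S. \<Sum>j=1..C. if jcls k C (marr m j) x then eps x else 0)"
      by (simp only: sum.distrib sum_distrib_left)
    also have "\<dots> = lam * X + mu * Y"
      unfolding X_def Y_def zeta_alt sum_distrib_left
      by (subst sum.swap, subst (2) sum.swap, rule refl)
    finally show ?thesis .
  qed
  have "K * jsq_zeta k C eps m = lam * X + mu * Y"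
    using L R st by (metis (no_types, lifting) sum.cong)
  moreover have "X = (\<Sum>i=1..C. real_of_int (m i + 1) * jsq_zeta k C eps (m(i - 1 := m (i - 1) - 1, i := m i + 1)))"
    unfolding X_def mdec_def ..
  moreover have "Y = (\<Sum>j=1..C. jsq_zeta k C eps
            (\<lambda>l. if l < j - 1 then 0 else if l = j - 1 then m l + 1 else if l = j then m l - 1 else m l))"
    unfolding Y_def marr_def ..
  ultimately show ?thesis using assms(4) unfolding K_def
    by (auto simp: field_simps)
qed

end
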